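(* The graph $G_p$ is isomorphic to the Cayley graph $\mathrm{Cay}(S_4,\mathcal{C})$, where $\mathcal{C}$ is the set of elements of order exactly $2$ in the symmetric group $S_4$.
   Context: For a group $G$ and an inverse-closed subset $\mathcal{C}\subseteq G$ not containing the identity, the Cayley graph $\mathrm{Cay}(G,\mathcal{C})$ has vertex set $G$, with $g$ and $h$ adjacent iff $hg^{-1}\in\mathcal{C}$. $G_p$ is the orthogonality graph of the following 24 vectors in $\mathbb{R}^4$ (vertices are the vectors; two are adjacent iff their standard inner product is $0$): $(1,0,0,0),(0,1,0,0),(0,0,1,0),(0,0,0,1)$; $(0,1,1,0),(1,0,0,-1),(1,0,0,1),(0,1,-1,0)$; $(1,1,1,1),(1,-1,1,-1),(1,-1,-1,1),(1,1,-1,-1)$; $(1,-1,0,0),(1,1,0,0),(0,0,1,1),(0,0,1,-1)$; $(-1,1,1,1),(1,1,1,-1),(1,-1,1,1),(1,1,-1,1)$; $(1,0,1,0),(0,1,0,1),(1,0,-1,0),(0,1,0,-1)$. *)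

theory Defs
  imports "HOL-Algebra.Sym_Groups" "HOL-Algebra.Multiplicative_Group"
begin

definition Gp_vectors :: "real list list" where
  "Gp_vectors =
    [[1,0,0,0],[0,1,0,0],[0,0,1,0],[0,0,0,1],
     [0,1,1,0],[1,0,0,-1],[1,0,0,1],[0,1,-1,0],
     [1,1,1,1],[1,-1,1,-1],[1,-1,-1,1],[1,1,-1,-1],
     [1,-1,0,0],[1,1,0,0],[0,0,1,1],[0,0,1,-1],
     [-1,1,1,1],[1,1,1,-1],[1,-1,1,1],[1,1,-1,1],
     [1,0,1,0],[0,1,0,1],[1,0,-1,0],[0,1,0,-1]]"

definition Gp_V :: "real list set" where
  "Gp_V = set Gp_vectors"

definition inner_list :: "real list \<Rightarrow> real list \<Rightarrow> real" where
  "inner_list u v = (\<Sum>(a, b) \<leftarrow> zip u v. a * b)"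

definition Gp_adj :: "real list \<Rightarrow> real list \<Rightarrow> bool" where
  "Gp_adj u v \<longleftrightarrow> inner_list u v = 0"

definition cayley_adj :: "('a, 'b) monoid_scheme \<Rightarrow> 'a set \<Rightarrow> 'a \<Rightarrow> 'a \<Rightarrow> bool" where
  "cayley_adj G C g h \<longleftrightarrow> h \<otimes>\<^bsub>G\<^esub> inv\<^bsub>G\<^esub> g \<in> C"

definition graph_iso :: "'a set \<Rightarrow> ('a \<Rightarrow> 'a \<Rightarrow> bool) \<Rightarrow> 'b set \<Rightarrow> ('b \<Rightarrow> 'b \<Rightarrow> bool) \<Rightarrow> bool" where
  "graph_iso V E W F \<longleftrightarrow>
     (\<exists>f. bij_betw f V W \<and> (\<forall>u\<in>V. \<forall>v\<in>V. E u v \<longleftrightarrow> F (f u) (f v)))"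

definition S4_order2 :: "(nat \<Rightarrow> nat) set" where
  "S4_order2 = {g \<in> carrier (sym_group 4). group.ord (sym_group 4) g = 2}"

end

theory Submission
  imports Defs
begin

definition pol :: "nat list \<Rightarrow> nat \<Rightarrow> nat" where
  "pol a i = (if 1 \<le> i \<and> i \<le> 4 then a ! (i - 1) else i)"

definition plist :: "nat list list" where
  "plist = [[1, 2, 3, 4], [2, 1, 4, 3], [3, 4, 1, 2], [4, 3, 2, 1], [1, 3, 2, 4], [2, 4, 1, 3], [3, 1, 4, 2], [4, 2, 3, 1], [2, 4, 3, 1], [1, 3, 4, 2], [4, 2, 1, 3], [3, 1, 2, 4], [3, 4, 2, 1], [4, 3, 1, 2], [1, 2, 4, 3], [2, 1, 3, 4], [4, 1, 3, 2], [3, 2, 4, 1], [2, 3, 1, 4], [1, 4, 2, 3], [4, 1, 2, 3], [3, 2, 1, 4], [2, 3, 4, 1], [1, 4, 3, 2]]"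

lemma pol_at: "pol a 1 = a!0" "pol a 2 = a!1" "pol a 3 = a!2" "pol a 4 = a!3"
  by (simp_all add: pol_def)

lemma len4_eq: "length a = 4 \<Longrightarrow> a = [pol a 1, pol a 2, pol a 3, pol a 4]"
  by (auto simp: pol_def numeral_eq_Suc length_Suc_conv)

lemma plist_props: "\<forall>a\<in>set plist. length a = 4 \<and> distinct a \<and> set a \<subseteq> {1,2,3,4}"
  by (simp add: plist_def)

lemma pol_permutes:
  assumes "length a = 4" "distinct a" "set a \<subseteq> {1,2,3,4}"
  shows "pol a permutes {1..4}"
proof -
  have "card (set a) = card {1,2,3,4::nat}" using assms(1,2) distinct_card by fastforce
  hence sa: "set a = {1,2,3,4}" using assms(3) by (simp add: card_subset_eq)
  have e: "a = [pol a 1, pol a 2, pol a 3, pol a 4]" using len4_eq assms(1) .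
  have S: "{1..4::nat} = {1,2,3,4}" by auto
  have img: "pol a ` {1..4} = {1..4}"
    using sa e S by (metis (no_types, lifting) image_empty image_insert list.set(1) list.set(2))
  have "card (pol a ` {1..4}) = card {1..4::nat}" using img by simp
  hence "inj_on (pol a) {1..4}" by (simp add: eq_card_imp_inj_on)
  hence "bij_betw (pol a) {1..4} {1..4}" using img by (simp add: bij_betw_def)
  thus ?thesis by (rule bij_imp_permutes) (auto simp add: pol_def)
qed

lemma mem_plist:
  assumes "a \<in> {1,2,3,4}" "b \<in> {1,2,3,4}" "c \<in> {1,2,3,4}" "d \<in> {1,2,3,4}" "distinct [a,b,c,d::nat]"
  shows "[a,b,c,d] \<in> set plist"
  using assms unfolding plist_def
  apply (elim insertE emptyE)
  apply (simp_all only: distinct.simps list.set insert_iff empty_iff list.inject simp_thms)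
  done

lemma carrier_eq: "carrier (sym_group 4) = pol ` set plist"
proof
  show "pol ` set plist \<subseteq> carrier (sym_group 4)"
    using plist_props pol_permutes by (auto simp: sym_group_carrier)
next
  show "carrier (sym_group 4) \<subseteq> pol ` set plist"
  proof
    fix p assume "p \<in> carrier (sym_group 4)"
    hence p: "p permutes {1..4}" by (simp add: sym_group_carrier)
    have in4: "p i \<in> {1,2,3,4}" if "i \<in> {1..4}" for i
      using permutes_in_image[OF p, of i] that by auto
    have i1: "p 1 \<in> {1,2,3,4}" by (rule in4) simp
    have i2: "p 2 \<in> {1,2,3,4}" by (rule in4) simp
    have i3: "p 3 \<in> {1,2,3,4}" by (rule in4) simp
    have i4: "p 4 \<in> {1,2,3,4}" by (rule in4) simp
    have inj: "inj p" using p permutes_inj by blast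
    have d: "distinct [p 1, p 2, p 3, p (4::nat)]" by (simp add: inj_eq[OF inj])
    have m: "[p 1, p 2, p 3, p 4] \<in> set plist" by (rule mem_plist[OF i1 i2 i3 i4 d])
    have "p = pol [p 1, p 2, p 3, p 4]"
    proof
      fix x show "p x = pol [p 1, p 2, p 3, p 4] x"
      proof (cases "x \<in> {1..4}")
        case True
        hence "x = 1 \<or> x = 2 \<or> x = 3 \<or> x = 4" by auto
        thus ?thesis by (auto simp: pol_def)
      next
        case False
        thus ?thesis using permutes_not_in[OF p False] by (auto simp: pol_def)
      qed
    qed
    thus "p \<in> pol ` set plist" using m by blast
  qed
qed

lemma pol_inj: "inj_on pol (set plist)"
proof
  fix a b assume "a \<in> set plist" "b \<in> set plist" "pol a = pol b"
  thus "a = b" using plist_props len4_eq by metis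
qed

lemma ord2_iff:
  assumes "k \<in> carrier (sym_group 4)"
  shows "group.ord (sym_group 4) k = 2 \<longleftrightarrow> k \<noteq> id \<and> k \<circ> k = id"
proof -
  interpret G: group "sym_group 4" by (rule sym_group_is_group)
  have pw: "k [^]\<^bsub>sym_group 4\<^esub> (2::nat) = k \<circ> k"
    by (simp add: numeral_2_eq_2 sym_group_mult sym_group_one)
  have "G.ord k = 2 \<longleftrightarrow> k \<noteq> \<one>\<^bsub>sym_group 4\<^esub> \<and> k [^]\<^bsub>sym_group 4\<^esub> (2::nat) = \<one>\<^bsub>sym_group 4\<^esub>"
  proof
    assume "G.ord k = 2"
    thus "k \<noteq> \<one>\<^bsub>sym_group 4\<^esub> \<and> k [^]\<^bsub>sym_group 4\<^esub> (2::nat) = \<one>\<^bsub>sym_group 4\<^esub>"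
      using G.ord_eq_1[OF assms] G.pow_eq_id[OF assms] by auto
  next
    assume h: "k \<noteq> \<one>\<^bsub>sym_group 4\<^esub> \<and> k [^]\<^bsub>sym_group 4\<^esub> (2::nat) = \<one>\<^bsub>sym_group 4\<^esub>"
    hence "G.ord k dvd 2" using G.pow_eq_id[OF assms] by auto
    moreover have "G.ord k \<noteq> 1" using h G.ord_eq_1[OF assms] by auto
    moreover have "G.ord k \<le> 2" using dvd_imp_le[OF \<open>G.ord k dvd 2\<close>] by simp
    moreover have "G.ord k \<noteq> 0" using \<open>G.ord k dvd 2\<close> by (metis dvd_0_left_iff zero_neq_numeral)
    ultimately show "G.ord k = 2" by linarith
  qed
  thus ?thesis using pw by (simp add: sym_group_one)
qed

lemma cay_iff:
  assumes g: "g permutes {1..4}" and h: "h permutes {1..4}"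
  shows "cayley_adj (sym_group 4) S4_order2 g h \<longleftrightarrow>
     g \<noteq> h \<and> (\<forall>j\<in>{1..4}. \<forall>x\<in>{1..4}. g x = h j \<longrightarrow> h x = g j)"
proof -
  have gc: "g \<in> carrier (sym_group 4)" and hc: "h \<in> carrier (sym_group 4)"
    using g h by (simp_all add: sym_group_carrier)
  define k where "k = h \<circ> inv' g"
  have kc: "k \<in> carrier (sym_group 4)"
    unfolding k_def using permutes_compose[OF permutes_inv[OF g] h] by (simp add: sym_group_carrier)
  have ca: "cayley_adj (sym_group 4) S4_order2 g h \<longleftrightarrow> k \<noteq> id \<and> k \<circ> k = id"
    unfolding cayley_adj_def S4_order2_def using gc kc ord2_iff[OF kc]
    by (simp add: k_def sym_group_mult)
  have gi1: "g (inv' g y) = y" for y using permutes_inverses(1)[OF g] .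
  have gi2: "inv' g (g y) = y" for y using permutes_inverses(2)[OF g] .
  have k1: "k \<noteq> id \<longleftrightarrow> g \<noteq> h"
  proof
    assume "k \<noteq> id"
    then obtain x where "h (inv' g x) \<noteq> x" by (auto simp: k_def fun_eq_iff)
    hence "h (inv' g x) \<noteq> g (inv' g x)" using gi1 by simp
    thus "g \<noteq> h" by auto
  next
    assume "g \<noteq> h"
    then obtain y where "g y \<noteq> h y" by auto
    hence "k (g y) \<noteq> g y" unfolding k_def using gi2 by auto
    thus "k \<noteq> id" by auto
  qed
  have k2: "k \<circ> k = id \<longleftrightarrow> (\<forall>j x. g x = h j \<longrightarrow> h x = g j)"
  proof
    assume kk: "k \<circ> k = id"
    show "\<forall>j x. g x = h j \<longrightarrow> h x = g j"
    proof (intro allI impI)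
      fix j x assume e: "g x = h j"
      have "k (k (g j)) = g j" using kk by (metis comp_apply id_apply)
      moreover have "k (g j) = h j" unfolding k_def using gi2 by simp
      moreover have "k (h j) = h x" unfolding k_def using e gi2 by (metis comp_apply)
      ultimately show "h x = g j" by simp
    qed
  next
    assume A: "\<forall>j x. g x = h j \<longrightarrow> h x = g j"
    show "k \<circ> k = id"
    proof
      fix y
      obtain j where j: "y = g j" using gi1 by metis
      have "k y = h j" unfolding k_def j using gi2 by simp
      moreover have "h (inv' g (h j)) = g j" using A[rule_format, of "inv' g (h j)" j] gi1 by simp
      ultimately show "(k \<circ> k) y = id y" unfolding k_def j by simp
    qed
  qed
  have k3: "(\<forall>j x. g x = h j \<longrightarrow> h x = g j) \<longleftrightarrow> (\<forall>j\<in>{1..4}. \<forall>x\<in>{1..4}. g x = h j \<longrightarrow> h x = g j)"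
  proof
    assume "\<forall>j x. g x = h j \<longrightarrow> h x = g j" thus "\<forall>j\<in>{1..4}. \<forall>x\<in>{1..4}. g x = h j \<longrightarrow> h x = g j" by blast
  next
    assume B: "\<forall>j\<in>{1..4}. \<forall>x\<in>{1..4}. g x = h j \<longrightarrow> h x = g j"
    show "\<forall>j x. g x = h j \<longrightarrow> h x = g j"
    proof (intro allI impI)
      fix j x assume e: "g x = h j"
      show "h x = g j"
      proof (cases "j \<in> {1..4}")
        case True
        hence hj: "h j \<in> {1..4}" using permutes_in_image[OF h, of j] by simp
        hence "g x \<in> {1..4}" using e by simp
        hence "x \<in> {1..4}" using permutes_in_image[OF g, of x] by simp
        thus ?thesis using B True e by blast
      next
        case False
        have hj: "h j = j" "g j = j" using permutes_not_in[OF g False] permutes_not_in[OF h False] by auto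
        have xn: "x \<notin> {1..4}" using e hj False permutes_in_image[OF g, of x] by auto
        have "g x = x" "h x = x" using permutes_not_in[OF g xn] permutes_not_in[OF h xn] by auto
        thus ?thesis using e hj by simp
      qed
    qed
  qed
  show ?thesis using ca k1 k2 k3 by blast
qed

definition adjL :: "nat list \<Rightarrow> nat list \<Rightarrow> bool" where
  "adjL a b \<longleftrightarrow> (\<forall>j\<in>{1,2,3,4}. \<forall>x\<in>{1,2,3,4}. pol a x = pol b j \<longrightarrow> pol b x = pol a j)"

lemma len_V: "length Gp_vectors = 24" by (simp add: Gp_vectors_def)
lemma len_P: "length plist = 24" by (simp add: plist_def)
lemma dist_V: "distinct Gp_vectors" by (simp add: Gp_vectors_def)
lemma dist_P: "distinct plist" by (simp add: plist_def)

lemma check: "\<forall>(u,a)\<in>set (zip Gp_vectors plist). \<forall>(v,b)\<in>set (zip Gp_vectors plist). (inner_list u v = 0) = (a \<noteq> b \<and> adjL a b)"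
  by (simp add: Gp_vectors_def plist_def adjL_def pol_def inner_list_def)

definition fmap :: "real list \<Rightarrow> nat \<Rightarrow> nat" where
  "fmap v = pol (the (map_of (zip Gp_vectors plist) v))"

lemma fmap_nth: "i < 24 \<Longrightarrow> fmap (Gp_vectors ! i) = pol (plist ! i)"
  unfolding fmap_def using map_of_zip_nth[of Gp_vectors plist i] len_V len_P dist_V by simp

lemma setV: "Gp_V = {Gp_vectors ! i | i. i < 24}"
  unfolding Gp_V_def using len_V by (auto simp: set_conv_nth)

lemma setV': "Gp_V = (!) Gp_vectors ` {..<24}"
  unfolding Gp_V_def using len_V by (auto simp: set_conv_nth)

lemma setP': "set plist = (!) plist ` {..<24}"
  using len_P by (auto simp: set_conv_nth)

lemma setP: "set plist = {plist ! i | i. i < 24}"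
  using len_P by (auto simp: set_conv_nth)

lemma pol_neq: "i < 24 \<Longrightarrow> j < 24 \<Longrightarrow> pol (plist!i) = pol (plist!j) \<longleftrightarrow> i = j"
proof
  assume ij: "i < 24" "j < 24" "pol (plist!i) = pol (plist!j)"
  hence "plist!i = plist!j" using pol_inj len_P by (metis inj_on_eq_iff nth_mem)
  thus "i = j" using dist_P ij len_P by (simp add: nth_eq_iff_index_eq)
qed simp

lemma adj_nth:
  assumes i: "i < 24" and j: "j < 24"
  shows "Gp_adj (Gp_vectors!i) (Gp_vectors!j) \<longleftrightarrow>
    cayley_adj (sym_group 4) S4_order2 (fmap (Gp_vectors!i)) (fmap (Gp_vectors!j))"
proof -
  have mi: "(Gp_vectors!i, plist!i) \<in> set (zip Gp_vectors plist)"
    using i len_V len_P by (metis length_zip min.idem nth_mem nth_zip)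
  have mj: "(Gp_vectors!j, plist!j) \<in> set (zip Gp_vectors plist)"
    using j len_V len_P by (metis length_zip min.idem nth_mem nth_zip)
  have c: "Gp_adj (Gp_vectors!i) (Gp_vectors!j) \<longleftrightarrow> (plist!i \<noteq> plist!j \<and> adjL (plist!i) (plist!j))"
    using check mi mj unfolding Gp_adj_def by fast
  have pi: "pol (plist!i) permutes {1..4}" and pj: "pol (plist!j) permutes {1..4}"
    using carrier_eq i j len_P by (metis image_eqI nth_mem sym_group_carrier)+
  have S: "{1..4::nat} = {1,2,3,4}" by auto
  have "plist!i \<noteq> plist!j \<longleftrightarrow> pol (plist!i) \<noteq> pol (plist!j)"
    using pol_neq[OF i j] dist_P i j len_P by (auto simp: nth_eq_iff_index_eq)
  thus ?thesis using c cay_iff[OF pi pj] fmap_nth[OF i] fmap_nth[OF j]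
    unfolding adjL_def S by simp
qed

theorem mainTheorem2:
  shows "graph_iso Gp_V Gp_adj (carrier (sym_group 4)) (cayley_adj (sym_group 4) S4_order2)"
  unfolding graph_iso_def
proof (intro exI conjI)
  show "bij_betw fmap Gp_V (carrier (sym_group 4))"
    unfolding bij_betw_def
  proof
    show "inj_on fmap Gp_V"
    proof
      fix u v assume "u \<in> Gp_V" "v \<in> Gp_V" "fmap u = fmap v"
      then obtain i j where "i < 24" "j < 24" "u = Gp_vectors!i" "v = Gp_vectors!j"
        "fmap u = fmap v" unfolding setV by blast
      thus "u = v" using fmap_nth pol_neq by metis
    qed
    show "fmap ` Gp_V = carrier (sym_group 4)"
      unfolding carrier_eq setV' setP' image_image using fmap_nth by (intro image_cong) auto
  qed
  show "\<forall>u\<in>Gp_V. \<forall>v\<in>Gp_V. Gp_adj u v \<longleftrightarrow> cayley_adj (sym_group 4) S4_order2 (fmap u) (fmap v)"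
    unfolding setV using adj_nth by blast
qed

end
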